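(* Let $0<\phi<\pi/6$, $T>0$, and let $r(y,t)=-\dfrac{15y}{8x^{7/2}}$ where $x=t+(3y/2)^{2/3}$. Then $R=\mathcal L^{-1}r$ satisfies $\|R\|_\nu<C\nu^{-1/3}$ for $\nu>1$, with $C$ independent of $\nu$ and $T$.
   Context: Powers use principal branches; $y$ ranges over a sector $|\arg y|<\pi/2+\phi'$ ($\phi<\phi'<\pi/6$), $|y|$ large. $\mathcal S_\phi=\{p:\arg p\in(-\phi,\phi),0<|p|<\infty\}$. $\mathcal L^{-1}g(p,t)=\frac1{2\pi i}\int_{\mathcal C}e^{py}g(y,t)dy$ with $\mathcal C=\{c+ire^{i\phi'\mathrm{sgn}(r)}:r\in\mathbb R\}$, $c>0$, traversed with $r$ increasing. With $\mathcal K=\overline{\mathcal S_\phi}\times[0,T]$, $\|G\|_\nu=M_0\sup_{\mathcal K}(1+|p|^2)e^{-\nu|p|}|G(p,t)|$, $M_0=\sup_{s\ge0}\frac{2(1+s^2)(\ln(1+s^2)+s\arctan s)}{s(s^2+4)}$. *)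

theory Defs
  imports "HOL-Analysis.Analysis"
begin

definition r_fun :: "complex \<Rightarrow> real \<Rightarrow> complex" where
  "r_fun y t = - (15 * y) / (8 * (complex_of_real t + (3 * y / 2) powr (2 / 3)) powr (7 / 2))"

definition contour_pt :: "real \<Rightarrow> real \<Rightarrow> real \<Rightarrow> complex" where
  "contour_pt c \<phi>' s = complex_of_real c + \<i> * complex_of_real s * exp (\<i> * complex_of_real (\<phi>' * sgn s))"

text \<open>Inverse Laplace transform along C (dy = i e^(i phi' sgn s) ds).\<close>
definition invLaplace :: "real \<Rightarrow> real \<Rightarrow> (complex \<Rightarrow> real \<Rightarrow> complex) \<Rightarrow> complex \<Rightarrow> real \<Rightarrow> complex" where
  "invLaplace c \<phi>' g p t =
     (1 / (2 * complex_of_real pi * \<i>)) *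
     integral UNIV (\<lambda>s::real. exp (p * contour_pt c \<phi>' s) * g (contour_pt c \<phi>' s) t
                              * (\<i> * exp (\<i> * complex_of_real (\<phi>' * sgn s))))"

definition sector :: "real \<Rightarrow> complex set" where
  "sector \<phi> = {p. p \<noteq> 0 \<and> - \<phi> < Arg p \<and> Arg p < \<phi>}"

definition M0 :: real where
  "M0 = Sup ((\<lambda>s::real. 2 * (1 + s\<^sup>2) * (ln (1 + s\<^sup>2) + s * arctan s) / (s * (s\<^sup>2 + 4))) ` {0..})"

text \<open>The weighted norm (as an extended real, so that an infinite supremum is +infinity).\<close>
definition nu_norm :: "real \<Rightarrow> real \<Rightarrow> real \<Rightarrow> (complex \<Rightarrow> real \<Rightarrow> complex) \<Rightarrow> ereal" where
  "nu_norm \<phi> T \<nu> G = ereal M0 *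
     (SUP (p, t) \<in> closure (sector \<phi>) \<times> {0..T}.
        ereal ((1 + (cmod p)\<^sup>2) * exp (- \<nu> * cmod p) * cmod (G p t)))"

end

theory Submission
  imports Defs "HOL-Complex_Analysis.Complex_Analysis" "HOL-Real_Asymp.Real_Asymp"
begin

lemma cos_two_thirds: assumes "-pi < th" "th \<le> pi" shows "cos (2/3*th) \<ge> -1/2"
proof -
  have "cos (th/3) \<ge> cos (pi/3)"
    using assms by (intro cos_monotone_0_pi_le[of "\<bar>th/3\<bar>" "pi/3", unfolded cos_abs_real]) auto
  hence "cos (th/3) \<ge> 1/2" by (simp add: cos_60)
  moreover have "cos (2/3*th) = 2 * (cos (th/3))^2 - 1"
    using cos_double_cos[of "th/3"] by (simp add: mult.commute)
  moreover have "(cos (th/3))^2 \<ge> (1/2)^2" using \<open>cos (th/3) \<ge> 1/2\<close> by (intro power_mono) auto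
  ultimately show ?thesis by (simp add: power2_eq_square)
qed

lemma powr23_Re: fixes z :: complex assumes "z \<noteq> 0"
  shows "Re (z powr (2/3)) \<ge> -(1/2) * cmod (z powr (2/3))"
proof -
  have e: "z powr (2/3) = exp (complex_of_real (2/3) * Ln z)" using assms by (simp add: powr_def)
  define u where "u = complex_of_real (2/3) * Ln z"
  have iu: "Im u = 2/3 * Im (Ln z)" by (simp add: u_def)
  have "cos (Im u) \<ge> -1/2" unfolding iu
    using mpi_less_Im_Ln[OF assms] Im_Ln_le_pi[OF assms] by (intro cos_two_thirds)
  hence "exp (Re u) * cos (Im u) \<ge> exp (Re u) * (-1/2)" by (intro mult_left_mono) auto
  thus ?thesis unfolding e u_def[symmetric] Re_exp norm_exp_eq_Re by simp
qed

lemma powr23_pos: fixes z :: complex assumes "z \<notin> \<real>\<^sub>\<le>\<^sub>0" "Im (z powr (2/3)) = 0"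
  shows "Re (z powr (2/3)) > 0"
proof -
  have nz: "z \<noteq> 0" using assms by auto
  have e: "z powr (2/3) = exp (complex_of_real (2/3) * Ln z)" using nz by (simp add: powr_def)
  have b: "-pi < Im (Ln z)" "Im (Ln z) < pi" using mpi_less_Im_Ln[OF nz] Im_Ln_less_pi[OF assms(1)] by auto
  have "sin (2/3 * Im (Ln z)) = 0" using assms(2) unfolding e Im_exp by simp
  then obtain n::int where n: "2/3 * Im (Ln z) = n * pi" using sin_zero_iff_int2 by blast
  have "n = 0"
  proof -
    have "\<bar>n * pi\<bar> < pi" using b n by auto
    hence "\<bar>real_of_int n\<bar> < 1" by (simp add: abs_mult)
    thus ?thesis by linarith
  qed
  hence "Im (Ln z) = 0" using n by simp
  thus ?thesis unfolding e Re_exp by simp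
qed

lemma norm_powr_pos: fixes z :: complex and a :: real
  shows "cmod (z powr (complex_of_real a)) = cmod z powr a"
  by (simp add: norm_powr_real_powr')

lemma x_lower: fixes y :: complex and t :: real assumes "y \<noteq> 0" "t \<ge> 0"
  shows "cmod (complex_of_real t + (3*y/2) powr (2/3)) \<ge> cmod y powr (2/3) / 2"
proof -
  define w where "w = (3*y/2) powr (2/3)"
  have nz: "3*y/2 \<noteq> 0" using assms by simp
  have Rw: "Re w \<ge> -(1/2) * cmod w" unfolding w_def using powr23_Re[OF nz] .
  have nw: "cmod w = (3/2 * cmod y) powr (2/3)"
  proof -
    have "cmod w = cmod (3*y/2) powr Re (2/3::complex)" unfolding w_def by (rule norm_powr_real_powr') simp
    also have "Re (2/3::complex) = 2/3" by simp
    also have "cmod (3*y/2) = 3/2 * cmod y" by (simp add: norm_mult norm_divide)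
    finally show ?thesis .
  qed
  have "cmod w \<ge> cmod y powr (2/3)" unfolding nw by (rule powr_mono2) simp_all
  have sq1: "(cmod (t + w))^2 = (t + Re w)^2 + (Im w)^2" by (simp add: cmod_power2)
  have sq2: "(cmod w)^2 = (Re w)^2 + (Im w)^2" by (simp add: cmod_power2)
  have sq: "(cmod (t + w))^2 = t^2 + 2*t*Re w + (cmod w)^2"
    unfolding sq1 sq2 by (simp add: power2_sum)
  have "(cmod (t + w))^2 \<ge> (cmod w / 2)^2"
  proof -
    have "2*t*Re w \<ge> 2*t*(-(1/2) * cmod w)" using Rw assms(2)
      by (intro mult_left_mono) auto
    hence "2*t*Re w \<ge> - t * cmod w" by simp
    hence "(cmod (t + w))^2 \<ge> t^2 - t * cmod w + (cmod w)^2" using sq by linarith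
    moreover have "t^2 - t * cmod w + (cmod w)^2 - (cmod w / 2)^2 = (t - cmod w/2)^2 + (cmod w)^2/2"
      by (simp add: power2_eq_square algebra_simps)
    moreover have "(t - cmod w/2)^2 + (cmod w)^2/2 \<ge> 0" by simp
    ultimately show ?thesis by linarith
  qed
  hence "cmod (t + w) \<ge> cmod w / 2" using power2_le_imp_le norm_ge_zero by blast
  show ?thesis using \<open>cmod w \<ge> cmod y powr (2/3)\<close> \<open>cmod (t + w) \<ge> cmod w / 2\<close> unfolding w_def by linarith
qed

lemma r_bound: fixes y :: complex and t :: real assumes "y \<noteq> 0" "t \<ge> 0"
  shows "cmod (r_fun y t) \<le> 30 * cmod y powr (-4/3)"
proof -
  define x where "x = complex_of_real t + (3*y/2) powr (2/3)"
  have xl: "cmod x \<ge> cmod y powr (2/3) / 2" unfolding x_def by (rule x_lower[OF assms])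
  have ny: "cmod y > 0" using assms by simp
  have X: "cmod (x powr (7/2)) = cmod x powr (7/2)"
  proof -
    have "cmod (x powr (7/2)) = cmod x powr Re (7/2::complex)" by (rule norm_powr_real_powr') simp
    also have "Re (7/2::complex) = 7/2" by simp
    finally show ?thesis .
  qed
  have "cmod x powr (7/2) \<ge> (cmod y powr (2/3) / 2) powr (7/2)"
    by (rule powr_mono2) (use xl in simp_all)
  also have "(cmod y powr (2/3) / 2) powr (7/2) = cmod y powr (7/3) / 2 powr (7/2)"
    by (simp add: powr_divide powr_powr)
  finally have X1: "cmod (x powr (7/2)) \<ge> cmod y powr (7/3) / 2 powr (7/2)" unfolding X .
  have t16: "2 powr (7/2) \<le> (16::real)"
  proof -
    have "(2::real) powr (7/2) \<le> 2 powr 4" by (rule powr_mono) simp_all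
    thus ?thesis by simp
  qed
  have py: "cmod y powr (7/3) > 0" using ny by simp
  have X2: "cmod (x powr (7/2)) \<ge> cmod y powr (7/3) / 16"
  proof -
    have "cmod y powr (7/3) / 16 \<le> cmod y powr (7/3) / 2 powr (7/2)"
      by (rule divide_left_mono) (use t16 py in simp_all)
    thus ?thesis using X1 by linarith
  qed
  have rr: "cmod (r_fun y t) = 15 * cmod y / (8 * cmod (x powr (7/2)))"
    unfolding r_fun_def x_def[symmetric] by (simp add: norm_divide norm_mult)
  also have "\<dots> \<le> 15 * cmod y / (8 * (cmod y powr (7/3) / 16))"
    by (rule divide_left_mono) (use X2 py ny mult_pos_pos[OF order.strict_trans2[OF _ X2] py] in simp_all)
  also have "\<dots> = 30 * (cmod y / cmod y powr (7/3))" by simp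
  also have "cmod y / cmod y powr (7/3) = cmod y powr (-4/3)"
  proof -
    have "cmod y powr (-4/3) = cmod y powr (1 - 7/3)" by simp
    also have "\<dots> = cmod y powr 1 / cmod y powr (7/3)" by (rule powr_diff)
    finally show ?thesis using ny by simp
  qed
  finally show ?thesis .
qed

lemma x_not_nonpos: fixes y :: complex and t :: real assumes "y \<notin> \<real>\<^sub>\<le>\<^sub>0" "t \<ge> 0"
  shows "3*y/2 \<notin> \<real>\<^sub>\<le>\<^sub>0" "complex_of_real t + (3*y/2) powr (2/3) \<notin> \<real>\<^sub>\<le>\<^sub>0"
proof -
  show z: "3*y/2 \<notin> \<real>\<^sub>\<le>\<^sub>0" using assms(1) by (auto simp: complex_nonpos_Reals_iff)
  show "complex_of_real t + (3*y/2) powr (2/3) \<notin> \<real>\<^sub>\<le>\<^sub>0"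
  proof
    assume a: "complex_of_real t + (3*y/2) powr (2/3) \<in> \<real>\<^sub>\<le>\<^sub>0"
    hence "Im ((3*y/2) powr (2/3)) = 0" by (simp add: complex_nonpos_Reals_iff)
    hence "Re ((3*y/2) powr (2/3)) > 0" by (rule powr23_pos[OF z])
    with a assms(2) show False by (simp add: complex_nonpos_Reals_iff)
  qed
qed

lemma r_holo: fixes t :: real assumes "t \<ge> 0"
  shows "(\<lambda>y. r_fun y t) holomorphic_on (- \<real>\<^sub>\<le>\<^sub>0)"
proof -
  have "(\<lambda>y. - (15 * y) / (8 * (complex_of_real t + (3 * y / 2) powr (2 / 3)) powr (7 / 2))) holomorphic_on (- \<real>\<^sub>\<le>\<^sub>0)"
  proof (intro holomorphic_intros)
    fix y :: complex assume y: "y \<in> - \<real>\<^sub>\<le>\<^sub>0"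
    show "3*y/2 \<notin> \<real>\<^sub>\<le>\<^sub>0" "complex_of_real t + (3*y/2) powr (2/3) \<notin> \<real>\<^sub>\<le>\<^sub>0"
      using x_not_nonpos[of y t] y assms by auto
    hence "complex_of_real t + (3*y/2) powr (2/3) \<noteq> 0" by auto
    thus "8 * (complex_of_real t + (3 * y / 2) powr (2 / 3)) powr (7 / 2) \<noteq> 0" by simp
  qed simp
  thus ?thesis unfolding r_fun_def .
qed

lemma maj_int: fixes c :: real assumes c: "c > 0"
  shows "((\<lambda>s. (c+s) powr (-4/3)) has_integral (3 * c powr (-1/3))) {0..}"
proof (intro has_integral_to_inf)
  define F where "F \<equiv> \<lambda>s::real. -3 * (c+s) powr (-1/3)"
  have "((\<lambda>s. (c+s) powr (-4/3)) has_integral (F y - F 0)) {0..y}" if "y \<ge> 0" for y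
    unfolding F_def using c that
    by (intro fundamental_theorem_of_calculus that)
       (auto intro!: derivative_eq_intros
               simp flip: has_real_derivative_iff_has_vector_derivative simp: powr_diff field_simps)
  then have "\<forall>\<^sub>F y in at_top. integral {0..y} (\<lambda>s. (c+s) powr (-4/3)) = F y - F 0"
    by (meson eventually_at_top_linorderI integral_unique)
  moreover have "((\<lambda>y::real. F y - F 0) \<longlongrightarrow> - F 0) at_top"
    using c unfolding F_def by real_asymp
  ultimately show "((\<lambda>y. integral {0..y} (\<lambda>s. (c+s) powr (-4/3))) \<longlongrightarrow> 3 * c powr (-1/3)) at_top"
    by (simp add: F_def filterlim_cong tendsto_cong)
next
  show "(\<lambda>s. (c+s) powr (-4/3)) integrable_on {0..y}" for y
    by (intro integrable_continuous_interval continuous_intros) (use c in auto)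
qed simp

lemma ray_int:
  fixes f :: "complex \<Rightarrow> complex" and d :: complex and c A :: real
  assumes c: "c > 0" and d: "cmod d = 1"
    and cont: "continuous_on {0..} (\<lambda>s::real. f (complex_of_real c + complex_of_real s * d))"
    and bnd: "\<And>s. s \<ge> 0 \<Longrightarrow> cmod (f (complex_of_real c + complex_of_real s * d)) \<le> A * (c+s) powr (-4/3)"
  shows "(\<lambda>s. f (complex_of_real c + complex_of_real s * d) * d) integrable_on {0..}"
    "cmod (integral {0..} (\<lambda>s. f (complex_of_real c + complex_of_real s * d) * d)) \<le> 3 * A * c powr (-1/3)"
    "(\<lambda>n. integral {0..real n} (\<lambda>s. f (complex_of_real c + complex_of_real s * d) * d))
        \<longlonglongrightarrow> integral {0..} (\<lambda>s. f (complex_of_real c + complex_of_real s * d) * d)"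
proof -
  define g where "g = (\<lambda>s::real. f (complex_of_real c + complex_of_real s * d) * d)"
  define h where "h = (\<lambda>s::real. A * (c+s) powr (-4/3))"
  have hi: "(h has_integral (A * (3 * c powr (-1/3)))) {0..}"
    unfolding h_def by (rule has_integral_mult_right[OF maj_int[OF c]])
  have gle: "norm (g s) \<le> h s" if "s \<in> {0..}" for s
    using bnd[of s] that d unfolding g_def h_def by (simp add: norm_mult)
  have gc: "continuous_on {0..} g" unfolding g_def by (intro continuous_intros cont)
  have gi: "g integrable_on {0..b}" for b
    by (rule integrable_continuous_interval) (rule continuous_on_subset[OF gc], auto)
  define fk where "fk = (\<lambda>k::nat. \<lambda>s. if s \<in> {..real k} then g s else 0)"
  have set: "{..real k} \<inter> {0..} = {0..real k}" for k by auto
  have fki: "fk k integrable_on {0..}" for k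
    unfolding fk_def integrable_restrict_Int set by (rule gi)
  have fkint: "integral {0..} (fk k) = integral {0..real k} g" for k
    unfolding fk_def integral_restrict_Int set ..
  have fkle: "norm (fk k s) \<le> h s" if "s \<in> {0..}" for k s
  proof -
    have "0 \<le> h s" using gle[OF that] norm_ge_zero[of "g s"] by linarith
    thus ?thesis using gle[OF that] unfolding fk_def by auto
  qed
  have conv: "(\<lambda>k. fk k s) \<longlonglongrightarrow> g s" if "s \<in> {0..}" for s
  proof (rule tendsto_eventually)
    have "\<forall>\<^sub>F k in sequentially. k \<ge> nat \<lceil>s\<rceil>" by (rule eventually_ge_at_top)
    thus "\<forall>\<^sub>F k in sequentially. fk k s = g s"
    proof eventually_elim
      case (elim k)
      have "s \<le> real (nat \<lceil>s\<rceil>)" by (rule real_nat_ceiling_ge)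
      also have "\<dots> \<le> real k" using elim by simp
      finally show ?case by (simp add: fk_def)
    qed
  qed
  note dc = dominated_convergence[OF fki has_integral_integrable[OF hi] fkle conv]
  show "g integrable_on {0..}" using dc(1) .
  show "(\<lambda>n. integral {0..real n} g) \<longlonglongrightarrow> integral {0..} g"
    using dc(2) unfolding fkint .
  have "cmod (integral {0..} g) \<le> integral {0..} h"
    by (rule integral_norm_bound_integral[OF dc(1) has_integral_integrable[OF hi] gle])
  also have "\<dots> = 3 * A * c powr (-1/3)" using integral_unique[OF hi] by simp
  finally show "cmod (integral {0..} g) \<le> 3 * A * c powr (-1/3)" .
qed

lemma seg_ftc:
  fixes f F :: "complex \<Rightarrow> complex" and S :: "complex set"
  assumes F: "\<And>z. z \<in> S \<Longrightarrow> (F has_field_derivative f z) (at z within S)" and S: "open S"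
    and ab: "a \<le> b" and inS: "\<And>s. s \<in> {a..b} \<Longrightarrow> z0 + complex_of_real s * v \<in> S"
  shows "((\<lambda>s. f (z0 + complex_of_real s * v) * v) has_integral
            (F (z0 + complex_of_real b * v) - F (z0 + complex_of_real a * v))) {a..b}"
proof (rule fundamental_theorem_of_calculus[OF ab])
  fix x assume x: "x \<in> {a..b}"
  have F': "(F has_field_derivative f (z0 + complex_of_real x * v)) (at (z0 + complex_of_real x * v))"
    using F[OF inS[OF x]] unfolding at_within_open[OF inS[OF x] S] .
  have g: "((\<lambda>z. z0 + z * v) has_field_derivative v) (at (complex_of_real x))"
    by (auto intro!: derivative_eq_intros)
  have "((\<lambda>z. F (z0 + z * v)) has_field_derivative (f (z0 + complex_of_real x * v) * v)) (at (complex_of_real x))"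
    using DERIV_chain2[OF F' g] .
  from has_vector_derivative_real_field[OF this]
  show "((\<lambda>s. F (z0 + complex_of_real s * v)) has_vector_derivative f (z0 + complex_of_real x * v) * v) (at x within {a..b})" .
qed

lemma ray_cauchy:
  fixes f :: "complex \<Rightarrow> complex" and d :: complex and c1 c2 A :: real
  assumes S: "open S" "convex S" and hol: "f holomorphic_on S"
    and c: "0 < c1" "c1 \<le> c2" and d: "cmod d = 1"
    and inS: "\<And>x s. x \<in> {c1..c2} \<Longrightarrow> s \<ge> 0 \<Longrightarrow> complex_of_real x + complex_of_real s * d \<in> S"
    and bnd: "\<And>x s. x \<in> {c1..c2} \<Longrightarrow> s \<ge> 0 \<Longrightarrow>
                 cmod (f (complex_of_real x + complex_of_real s * d)) \<le> A * (x+s) powr (-4/3)"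
  shows "integral {0..} (\<lambda>s. f (complex_of_real c1 + complex_of_real s * d) * d)
       - integral {0..} (\<lambda>s. f (complex_of_real c2 + complex_of_real s * d) * d)
       = integral {c1..c2} (\<lambda>x. f (complex_of_real x))"
proof -
  obtain F where F: "\<And>z. z \<in> S \<Longrightarrow> (F has_field_derivative f z) (at z within S)"
    using holomorphic_convex_primitive'[OF S(2) S(1) hol] by blast
  have cont: "continuous_on {0..} (\<lambda>s::real. f (complex_of_real c + complex_of_real s * d))"
    if "c \<in> {c1..c2}" for c
  proof (rule continuous_on_compose2[OF holomorphic_on_imp_continuous_on[OF hol]])
    show "continuous_on {0..} (\<lambda>s::real. complex_of_real c + complex_of_real s * d)"
      by (intro continuous_intros)
    show "(\<lambda>s::real. complex_of_real c + complex_of_real s * d) ` {0..} \<subseteq> S"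
      using inS[OF that] by auto
  qed
  have c1i: "c1 \<in> {c1..c2}" and c2i: "c2 \<in> {c1..c2}" using c by auto
  have bnd1: "\<And>s. s \<ge> 0 \<Longrightarrow> cmod (f (complex_of_real c + complex_of_real s * d)) \<le> A * (c+s) powr (-4/3)"
    if "c \<in> {c1..c2}" for c using bnd[OF that] .
  have cpos: "c > 0" if "c \<in> {c1..c2}" for c using that c by auto
  note R1 = ray_int[OF cpos[OF c1i] d cont[OF c1i] bnd1[OF c1i]]
  note R2 = ray_int[OF cpos[OF c2i] d cont[OF c2i] bnd1[OF c2i]]
  have ftc: "integral {0..real n} (\<lambda>s. f (complex_of_real c + complex_of_real s * d) * d)
       = F (complex_of_real c + complex_of_real (real n) * d) - F (complex_of_real c)" if "c \<in> {c1..c2}" for c n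
    using integral_unique[OF seg_ftc[OF F S(1), of 0 "real n" "complex_of_real c" d]] inS[OF that] by simp
  define B where "B = (\<lambda>L::real. integral {c1..c2} (\<lambda>x. f (complex_of_real x + complex_of_real L * d)))"
  have Bhas: "((\<lambda>x. f (complex_of_real x + complex_of_real L * d)) has_integral
        (F (complex_of_real c2 + complex_of_real L * d) - F (complex_of_real c1 + complex_of_real L * d))) {c1..c2}"
    if "L \<ge> 0" for L
    using seg_ftc[OF F S(1) c(2), of "complex_of_real L * d" 1] inS that by (simp add: add.commute)
  have BF: "B L = F (complex_of_real c2 + complex_of_real L * d) - F (complex_of_real c1 + complex_of_real L * d)"
    if "L \<ge> 0" for L unfolding B_def using integral_unique[OF Bhas[OF that]] .
  have Bbnd: "cmod (B (real n)) \<le> A * real n powr (-4/3) * (c2 - c1)" if "n > 0" for n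
  proof -
    have "norm (F (complex_of_real c2 + complex_of_real (real n) * d) - F (complex_of_real c1 + complex_of_real (real n) * d))
           \<le> (A * real n powr (-4/3)) * Henstock_Kurzweil_Integration.content (cbox c1 c2)"
    proof (rule has_integral_bound)
      show "((\<lambda>x. f (complex_of_real x + complex_of_real (real n) * d)) has_integral
        (F (complex_of_real c2 + complex_of_real (real n) * d) - F (complex_of_real c1 + complex_of_real (real n) * d))) (cbox c1 c2)"
        using Bhas[of "real n"] by simp
      fix x assume x: "x \<in> cbox c1 c2"
      hence x': "x \<in> {c1..c2}" by simp
      have "norm (f (complex_of_real x + complex_of_real (real n) * d)) \<le> A * (x + real n) powr (-4/3)"
        using bnd[OF x', of "real n"] by simp
      also have "\<dots> \<le> A * real n powr (-4/3)"
      proof (rule mult_left_mono)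
        show "(x + real n) powr (-4/3) \<le> real n powr (-4/3)"
          by (rule powr_mono2') (use x' c that in auto)
        have "0 \<le> norm (f (complex_of_real x + complex_of_real (real n) * d))" by simp
        also have "\<dots> \<le> A * (x + real n) powr (-4/3)" using bnd[OF x', of "real n"] by simp
        finally show "0 \<le> A" using x' c that
          by (simp add: zero_le_mult_iff)
      qed
      finally show "norm (f (complex_of_real x + complex_of_real (real n) * d)) \<le> A * real n powr (-4/3)" .
    next
      have "0 \<le> norm (f (complex_of_real c1 + complex_of_real 0 * d))" by simp
      also have "\<dots> \<le> A * (c1 + 0) powr (-4/3)" using bnd[OF c1i, of 0] by simp
      finally have "0 \<le> A" using c by (simp add: zero_le_mult_iff)
      thus "0 \<le> A * real n powr (-4/3)" by simp
    qed
    thus ?thesis using BF[of "real n"] c by simp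
  qed
  have B0: "(\<lambda>n. B (real n)) \<longlonglongrightarrow> 0"
  proof (rule Lim_null_comparison)
    show "\<forall>\<^sub>F n in sequentially. norm (B (real n)) \<le> A * real n powr (-4/3) * (c2 - c1)"
      using eventually_gt_at_top[of 0] by eventually_elim (use Bbnd in auto)
    have "((\<lambda>n::nat. real n powr (-4/3)) \<longlonglongrightarrow> 0)" by real_asymp
    thus "(\<lambda>n. A * real n powr (-4/3) * (c2 - c1)) \<longlonglongrightarrow> 0"
      by (auto intro!: tendsto_mult_left_zero tendsto_mult_right_zero)
  qed
  have eq: "integral {0..real n} (\<lambda>s. f (complex_of_real c1 + complex_of_real s * d) * d)
          - integral {0..real n} (\<lambda>s. f (complex_of_real c2 + complex_of_real s * d) * d)
          = B 0 - B (real n)" for n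
    unfolding ftc[OF c1i] ftc[OF c2i] BF[of 0, simplified] BF[of "real n", simplified] by simp
  have "(\<lambda>n. integral {0..real n} (\<lambda>s. f (complex_of_real c1 + complex_of_real s * d) * d)
          - integral {0..real n} (\<lambda>s. f (complex_of_real c2 + complex_of_real s * d) * d))
        \<longlonglongrightarrow> integral {0..} (\<lambda>s. f (complex_of_real c1 + complex_of_real s * d) * d)
          - integral {0..} (\<lambda>s. f (complex_of_real c2 + complex_of_real s * d) * d)"
    by (intro tendsto_diff R1(3) R2(3))
  moreover have "(\<lambda>n. B 0 - B (real n)) \<longlonglongrightarrow> B 0 - 0" by (intro tendsto_diff tendsto_const B0)
  ultimately have "integral {0..} (\<lambda>s. f (complex_of_real c1 + complex_of_real s * d) * d)
          - integral {0..} (\<lambda>s. f (complex_of_real c2 + complex_of_real s * d) * d) = B 0 - 0"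
    unfolding eq by (rule LIMSEQ_unique)
  thus ?thesis unfolding B_def by simp
qed

lemma reflect_half:
  fixes g :: "real \<Rightarrow> complex" and m :: "real \<Rightarrow> real"
  assumes mi: "m integrable_on {0..}" and le: "\<And>x. x \<ge> 0 \<Longrightarrow> norm (g x) \<le> m x"
    and gi: "\<And>b. g integrable_on {0..b}"
    and lim: "(\<lambda>n. integral {0..real n} g) \<longlonglongrightarrow> I"
  shows "((\<lambda>s. g (-s)) has_integral I) {..0}"
proof -
  have m0: "0 \<le> m x" if "x \<in> {0..}" for x using order_trans[OF norm_ge_zero le[of x]] that by auto
  have mabs: "m absolutely_integrable_on {0..}" by (rule nonnegative_absolutely_integrable_1[OF mi m0])
  have "(\<lambda>x. m (-x)) absolutely_integrable_on {..0} \<and> integral {..0} (\<lambda>x. m (-x)) = integral {0..} m"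
    by (subst has_absolute_integral_reflect_real[of "{..0}" "{0..}"]) (use mabs in auto)
  hence mri: "(\<lambda>x. m (-x)) integrable_on {..0}"
    using set_lebesgue_integral_eq_integral(1) by blast
  define fk where "fk = (\<lambda>k::nat. \<lambda>s. if s \<in> {-real k..} then g (-s) else 0)"
  have set: "{-real k..} \<inter> {..0} = {-real k..-0}" for k by auto
  have fki: "fk k integrable_on {..0}" for k
    unfolding fk_def integrable_restrict_Int set using gi[of "real k"] by (simp only: Henstock_Kurzweil_Integration.integrable_reflect_real)
  have fkint: "integral {..0} (fk k) = integral {0..real k} g" for k
  proof -
    have "integral {..0} (fk k) = integral {-real k..-0} (\<lambda>s. g (-s))"
      unfolding fk_def integral_restrict_Int set ..
    also have "\<dots> = integral {0..real k} g"
      using gi[of "real k"] by (metis has_integral_reflect_real integrable_integral integral_unique)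
    finally show ?thesis .
  qed
  have fkle: "norm (fk k s) \<le> m (-s)" if "s \<in> {..0}" for k s
  proof -
    have "0 \<le> m (-s)" using m0[of "-s"] that by auto
    thus ?thesis using le[of "-s"] that unfolding fk_def by auto
  qed
  have conv: "(\<lambda>k. fk k s) \<longlonglongrightarrow> g (-s)" if "s \<in> {..0}" for s
  proof (rule tendsto_eventually)
    have "\<forall>\<^sub>F k in sequentially. k \<ge> nat \<lceil>-s\<rceil>" by (rule eventually_ge_at_top)
    thus "\<forall>\<^sub>F k in sequentially. fk k s = g (-s)"
    proof eventually_elim
      case (elim k)
      have "-s \<le> real (nat \<lceil>-s\<rceil>)" by (rule real_nat_ceiling_ge)
      also have "\<dots> \<le> real k" using elim by simp
      finally show ?case by (simp add: fk_def)
    qed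
  qed
  note dc = dominated_convergence[OF fki mri fkle conv]
  have "integral {..0} (\<lambda>s. g (-s)) = I"
    using dc(2) unfolding fkint using lim LIMSEQ_unique by blast
  thus ?thesis using dc(1) by (metis has_integral_integrable_integral)
qed

definition dirv :: "real \<Rightarrow> real \<Rightarrow> complex" where "dirv \<phi>' \<sigma> = Complex (- sin \<phi>') (\<sigma> * cos \<phi>')"
definition ff :: "complex \<Rightarrow> real \<Rightarrow> complex \<Rightarrow> complex" where "ff p t y = exp (p * y) * r_fun y t"
definition hp :: "real \<Rightarrow> complex set" where "hp \<sigma> = {y. 0 < Re y + \<sigma> * Im y}"

lemma trig: assumes "0 < \<phi>'" "\<phi>' < pi/6"
  shows "0 < sin \<phi>'" "sin \<phi>' < 1/2" "1/2 < cos \<phi>'"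
proof -
  show "0 < sin \<phi>'" using assms by (intro sin_gt_zero) auto
  have "sin \<phi>' < sin (pi/6)" using assms by (subst sin_mono_less_eq) auto
  thus "sin \<phi>' < 1/2" by (simp add: sin_30)
  have "cos (pi/3) < cos \<phi>'" using assms by (subst cos_mono_less_eq) auto
  thus "1/2 < cos \<phi>'" by (simp add: cos_60)
qed

lemma sig: assumes "\<sigma> = 1 \<or> \<sigma> = -1" shows "\<sigma> * \<sigma> = (1::real)" using assms by auto

lemma dirv_norm: assumes "\<sigma> = 1 \<or> \<sigma> = -1" shows "cmod (dirv \<phi>' \<sigma>) = 1"
proof -
  have "(cmod (dirv \<phi>' \<sigma>))^2 = (sin \<phi>')^2 + (\<sigma>*\<sigma>) * (cos \<phi>')^2"
    unfolding dirv_def cmod_power2 by (simp add: power2_eq_square)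
  also have "\<dots> = 1" using sig[OF assms] by simp
  finally have "cmod (dirv \<phi>' \<sigma>) = 1 \<or> cmod (dirv \<phi>' \<sigma>) = -1" by (simp add: power2_eq_1_iff)
  thus ?thesis using norm_ge_zero[of "dirv \<phi>' \<sigma>"] by linarith
qed

lemma pt_norm: assumes "0 < \<phi>'" "\<phi>' < pi/6" "\<sigma> = 1 \<or> \<sigma> = -1" "x \<ge> 0" "s \<ge> 0"
  shows "cmod (complex_of_real x + complex_of_real s * dirv \<phi>' \<sigma>) \<ge> (x+s)/2"
proof -
  note tr = trig[OF assms(1,2)]
  have "(cmod (complex_of_real x + complex_of_real s * dirv \<phi>' \<sigma>))^2
        = (x - s * sin \<phi>')^2 + (\<sigma>*\<sigma>) * s^2 * (cos \<phi>')^2"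
    unfolding dirv_def cmod_power2 by (simp add: power2_eq_square algebra_simps)
  also have "\<dots> = x^2 - 2 * x * s * sin \<phi>' + s^2"
    unfolding sig[OF assms(3)] cos_squared_eq by (simp add: power2_eq_square algebra_simps)
  also have "\<dots> \<ge> x^2 - x * s + s^2"
  proof -
    have "2 * x * s * sin \<phi>' \<le> 2 * x * s * (1/2)" using tr assms by (intro mult_left_mono) auto
    thus ?thesis by simp
  qed
  finally have a: "(cmod (complex_of_real x + complex_of_real s * dirv \<phi>' \<sigma>))^2 \<ge> x^2 - x * s + s^2" .
  have "x^2 - x * s + s^2 - ((x+s)/2)^2 = 3/4 * (x - s)^2" by (simp add: power2_eq_square algebra_simps)
  moreover have "0 \<le> 3/4 * (x - s)^2" by simp
  ultimately have "x^2 - x * s + s^2 \<ge> ((x+s)/2)^2" by linarith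
  with a have "((x+s)/2)^2 \<le> (cmod (complex_of_real x + complex_of_real s * dirv \<phi>' \<sigma>))^2" by linarith
  thus ?thesis using power2_le_imp_le norm_ge_zero by blast
qed

lemma in_hp: assumes "0 < \<phi>'" "\<phi>' < pi/6" "\<sigma> = 1 \<or> \<sigma> = -1" "x > 0" "s \<ge> 0"
  shows "complex_of_real x + complex_of_real s * dirv \<phi>' \<sigma> \<in> hp \<sigma>"
proof -
  note tr = trig[OF assms(1,2)]
  have "Re (complex_of_real x + complex_of_real s * dirv \<phi>' \<sigma>) + \<sigma> * Im (complex_of_real x + complex_of_real s * dirv \<phi>' \<sigma>)
      = x + s * (cos \<phi>' - sin \<phi>') * (\<sigma>*\<sigma>) + s * sin \<phi>' * (\<sigma>*\<sigma> - 1)"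
    unfolding dirv_def by (simp add: algebra_simps)
  also have "\<dots> = x + s * (cos \<phi>' - sin \<phi>')" using sig[OF assms(3)] by simp
  also have "\<dots> > 0" using tr assms by (intro add_pos_nonneg mult_nonneg_nonneg) auto
  finally show ?thesis unfolding hp_def by simp
qed

lemma hp_props: shows "hp \<sigma> \<subseteq> - \<real>\<^sub>\<le>\<^sub>0" "open (hp \<sigma>)" "convex (hp \<sigma>)"
proof -
  show "hp \<sigma> \<subseteq> - \<real>\<^sub>\<le>\<^sub>0" unfolding hp_def by (auto simp: complex_nonpos_Reals_iff)
  have e: "hp \<sigma> = {y. inner (Complex 1 \<sigma>) y > 0}" unfolding hp_def by (simp add: inner_complex_def)
  show "open (hp \<sigma>)" unfolding e by (rule open_halfspace_gt)
  show "convex (hp \<sigma>)" unfolding e by (rule convex_halfspace_gt)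
qed

lemma sector_Re: assumes "0 < \<phi>" "\<phi> < \<phi>'" "\<phi>' < pi/6" "\<sigma> = 1 \<or> \<sigma> = -1" "p \<in> closure (sector \<phi>)"
  shows "Re (p * dirv \<phi>' \<sigma>) \<le> 0"
proof -
  have sub: "sector \<phi> \<subseteq> {p. Re (p * dirv \<phi>' \<sigma>) \<le> 0}"
  proof
    fix q assume q: "q \<in> sector \<phi>"
    define th where "th = Arg q"
    have th: "-\<phi> < th" "th < \<phi>" using q unfolding sector_def th_def by auto
    have q': "q = rcis (cmod q) th" unfolding th_def by (simp add: rcis_cmod_Arg)
    have ReIm: "Re q = cmod q * cos th" "Im q = cmod q * sin th"
      by (subst q', simp)+
    have "Re (q * dirv \<phi>' \<sigma>) = - cmod q * sin (\<phi>' + \<sigma> * th)"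
      using assms(4) unfolding dirv_def by (auto simp: ReIm sin_add sin_diff algebra_simps)
    also have "\<dots> \<le> 0"
    proof -
      have "0 < \<phi>' + \<sigma> * th" "\<phi>' + \<sigma> * th < pi" using assms th by auto
      hence "0 < sin (\<phi>' + \<sigma> * th)" by (rule sin_gt_zero)
      thus ?thesis by simp
    qed
    finally show "q \<in> {p. Re (p * dirv \<phi>' \<sigma>) \<le> 0}" by simp
  qed
  have cl: "closed {p. Re (p * dirv \<phi>' \<sigma>) \<le> 0}"
    by (intro closed_Collect_le continuous_intros)
  show ?thesis using closure_minimal[OF sub cl] assms(5) by auto
qed

lemma ff_holo: assumes "t \<ge> 0" shows "ff p t holomorphic_on hp \<sigma>"
proof -
  have "(\<lambda>y. exp (p * y) * r_fun y t) holomorphic_on hp \<sigma>"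
    by (intro holomorphic_intros holomorphic_on_subset[OF r_holo[OF assms] hp_props(1)])
  thus ?thesis unfolding ff_def[abs_def] .
qed

lemma ff_bound: assumes "0 < \<phi>'" "\<phi>' < pi/6" "\<sigma> = 1 \<or> \<sigma> = -1" "x > 0" "s \<ge> 0" "t \<ge> 0"
    and Rp: "Re (p * dirv \<phi>' \<sigma>) \<le> 0"
  shows "cmod (ff p t (complex_of_real x + complex_of_real s * dirv \<phi>' \<sigma>)) \<le> exp (x * cmod p) * 120 * (x+s) powr (-4/3)"
proof -
  define y where "y = complex_of_real x + complex_of_real s * dirv \<phi>' \<sigma>"
  have yn: "cmod y \<ge> (x+s)/2" unfolding y_def by (rule pt_norm) (use assms in auto)
  have xs: "(x+s)/2 > 0" using assms by auto
  have y0: "y \<noteq> 0" using yn xs by auto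
  have "Re (p * y) = x * Re p + s * Re (p * dirv \<phi>' \<sigma>)" unfolding y_def by (simp add: algebra_simps)
  also have "\<dots> \<le> x * cmod p"
  proof -
    have "s * Re (p * dirv \<phi>' \<sigma>) \<le> 0" using Rp assms(5) by (simp add: mult_nonneg_nonpos)
    moreover have "x * Re p \<le> x * cmod p" using assms(4) complex_Re_le_cmod by (intro mult_left_mono) auto
    ultimately show ?thesis by linarith
  qed
  finally have e: "cmod (exp (p * y)) \<le> exp (x * cmod p)" by (simp add: norm_exp_eq_Re)
  have "cmod (r_fun y t) \<le> 30 * cmod y powr (-4/3)" by (rule r_bound[OF y0 assms(6)])
  also have "cmod y powr (-4/3) \<le> ((x+s)/2) powr (-4/3)" by (rule powr_mono2') (use yn xs in auto)
  also have "((x+s)/2) powr (-4/3) = (x+s) powr (-4/3) / 2 powr (-4/3)"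
    by (rule powr_divide)
  also have "\<dots> \<le> (x+s) powr (-4/3) / (1/4)"
  proof (rule divide_left_mono)
    have "(2::real) powr (-2) \<le> 2 powr (-4/3)" by (rule powr_mono) auto
    thus "1/4 \<le> (2::real) powr (-4/3)" by (simp add: powr_minus)
  qed (use xs in auto)
  finally have r: "cmod (r_fun y t) \<le> 120 * (x+s) powr (-4/3)" by simp
  have "cmod (ff p t y) = cmod (exp (p * y)) * cmod (r_fun y t)" unfolding ff_def by (simp add: norm_mult)
  also have "\<dots> \<le> exp (x * cmod p) * (120 * (x+s) powr (-4/3))"
    by (rule mult_mono[OF e r]) auto
  finally show ?thesis unfolding y_def by simp
qed

definition Phi :: "real \<Rightarrow> real \<Rightarrow> complex \<Rightarrow> real \<Rightarrow> real \<Rightarrow> complex" where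
  "Phi \<phi>' \<sigma> p t c = integral {0..} (\<lambda>s. ff p t (complex_of_real c + complex_of_real s * dirv \<phi>' \<sigma>) * dirv \<phi>' \<sigma>)"

lemma ray_cont: assumes "0 < \<phi>'" "\<phi>' < pi/6" "\<sigma> = 1 \<or> \<sigma> = -1" "c > 0" "t \<ge> 0"
  shows "continuous_on {0..} (\<lambda>s::real. ff p t (complex_of_real c + complex_of_real s * dirv \<phi>' \<sigma>))"
proof (rule continuous_on_compose2[OF holomorphic_on_imp_continuous_on[OF ff_holo[OF assms(5), of p \<sigma>]]])
  show "continuous_on {0..} (\<lambda>s::real. complex_of_real c + complex_of_real s * dirv \<phi>' \<sigma>)"
    by (intro continuous_intros)
  show "(\<lambda>s::real. complex_of_real c + complex_of_real s * dirv \<phi>' \<sigma>) ` {0..} \<subseteq> hp \<sigma>"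
    using in_hp[OF assms(1-4)] by auto
qed

lemma Phi_props: assumes "0 < \<phi>'" "\<phi>' < pi/6" "\<sigma> = 1 \<or> \<sigma> = -1" "c > 0" "t \<ge> 0"
    and Rp: "Re (p * dirv \<phi>' \<sigma>) \<le> 0"
  shows "(\<lambda>s. ff p t (complex_of_real c + complex_of_real s * dirv \<phi>' \<sigma>) * dirv \<phi>' \<sigma>) integrable_on {0..}"
    "cmod (Phi \<phi>' \<sigma> p t c) \<le> 3 * (exp (c * cmod p) * 120) * c powr (-1/3)"
    "(\<lambda>n. integral {0..real n} (\<lambda>s. ff p t (complex_of_real c + complex_of_real s * dirv \<phi>' \<sigma>) * dirv \<phi>' \<sigma>))
        \<longlonglongrightarrow> Phi \<phi>' \<sigma> p t c"
  unfolding Phi_def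
  by (rule ray_int[OF assms(4) dirv_norm[OF assms(3)] ray_cont[OF assms(1-5)]],
      rule ff_bound[OF assms(1-3) assms(4) _ assms(5) Rp], simp)+

lemma Phi_cauchy: assumes "0 < \<phi>'" "\<phi>' < pi/6" "\<sigma> = 1 \<or> \<sigma> = -1" "0 < c1" "c1 \<le> c2" "t \<ge> 0"
    and Rp: "Re (p * dirv \<phi>' \<sigma>) \<le> 0"
  shows "Phi \<phi>' \<sigma> p t c1 - Phi \<phi>' \<sigma> p t c2 = integral {c1..c2} (\<lambda>x. ff p t (complex_of_real x))"
  unfolding Phi_def
proof (rule ray_cauchy[OF hp_props(2,3) ff_holo[OF assms(6)] assms(4,5) dirv_norm[OF assms(3)]])
  fix x s :: real assume x: "x \<in> {c1..c2}" and s: "0 \<le> s"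
  show "complex_of_real x + complex_of_real s * dirv \<phi>' \<sigma> \<in> hp \<sigma>"
    using in_hp[OF assms(1-3) _ s, of x] x assms(4) by auto
  have "cmod (ff p t (complex_of_real x + complex_of_real s * dirv \<phi>' \<sigma>)) \<le> exp (x * cmod p) * 120 * (x+s) powr (-4/3)"
    using ff_bound[OF assms(1-3) _ s assms(6) Rp, of x] x assms(4) by auto
  also have "\<dots> \<le> exp (c2 * cmod p) * 120 * (x+s) powr (-4/3)"
  proof -
    have "exp (x * cmod p) \<le> exp (c2 * cmod p)" using x by (auto intro!: mult_right_mono)
    thus ?thesis by (intro mult_right_mono) auto
  qed
  finally show "cmod (ff p t (complex_of_real x + complex_of_real s * dirv \<phi>' \<sigma>)) \<le> exp (c2 * cmod p) * 120 * (x+s) powr (-4/3)" .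
qed

lemma fac_pos: assumes "s > 0" shows "\<i> * exp (\<i> * complex_of_real (\<phi>' * sgn s)) = dirv \<phi>' 1"
proof -
  have "exp (\<i> * complex_of_real (\<phi>' * sgn s)) = cis \<phi>'" using assms by (simp add: cis_conv_exp)
  thus ?thesis by (simp add: dirv_def complex_eq_iff)
qed

lemma fac_neg: assumes "s < 0" shows "\<i> * exp (\<i> * complex_of_real (\<phi>' * sgn s)) = - dirv \<phi>' (-1)"
proof -
  have "exp (\<i> * complex_of_real (\<phi>' * sgn s)) = cis (-\<phi>')" using assms by (simp add: cis_conv_exp)
  thus ?thesis by (simp add: dirv_def complex_eq_iff)
qed

lemma cpt_pos: assumes "s > 0" shows "contour_pt c \<phi>' s = complex_of_real c + complex_of_real s * dirv \<phi>' 1"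
proof -
  have "contour_pt c \<phi>' s = complex_of_real c + complex_of_real s * (\<i> * exp (\<i> * complex_of_real (\<phi>' * sgn s)))"
    unfolding contour_pt_def by (simp add: algebra_simps)
  thus ?thesis unfolding fac_pos[OF assms] .
qed

lemma cpt_neg: assumes "s < 0" shows "contour_pt c \<phi>' s = complex_of_real c + complex_of_real (-s) * dirv \<phi>' (-1)"
proof -
  have "contour_pt c \<phi>' s = complex_of_real c + complex_of_real s * (\<i> * exp (\<i> * complex_of_real (\<phi>' * sgn s)))"
    unfolding contour_pt_def by (simp add: algebra_simps)
  thus ?thesis unfolding fac_neg[OF assms] by simp
qed

lemma invL_eq: assumes "0 < \<phi>'" "\<phi>' < pi/6" "c > 0" "t \<ge> 0"
    and Rp1: "Re (p * dirv \<phi>' 1) \<le> 0" and Rp2: "Re (p * dirv \<phi>' (-1)) \<le> 0"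
  shows "invLaplace c \<phi>' r_fun p t = 1 / (2 * complex_of_real pi * \<i>) * (Phi \<phi>' 1 p t c - Phi \<phi>' (-1) p t c)"
proof -
  define h where "h = (\<lambda>s::real. exp (p * contour_pt c \<phi>' s) * r_fun (contour_pt c \<phi>' s) t
                              * (\<i> * exp (\<i> * complex_of_real (\<phi>' * sgn s))))"
  define gp where "gp = (\<lambda>s::real. ff p t (complex_of_real c + complex_of_real s * dirv \<phi>' 1) * dirv \<phi>' 1)"
  define G where "G = (\<lambda>s::real. - (ff p t (complex_of_real c + complex_of_real s * dirv \<phi>' (-1)) * dirv \<phi>' (-1)))"
  have s1: "(1::real) = 1 \<or> (1::real) = -1" and s2: "(-1::real) = 1 \<or> (-1::real) = -1" by auto
  note PP = Phi_props[OF assms(1,2) s1 assms(3,4) Rp1]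
  note PM = Phi_props[OF assms(1,2) s2 assms(3,4) Rp2]
  have gpi: "(gp has_integral Phi \<phi>' 1 p t c) {0..}"
    using PP(1) unfolding gp_def Phi_def by (simp add: has_integral_integral)
  have up: "(h has_integral Phi \<phi>' 1 p t c) {0..}"
  proof (rule has_integral_spike[OF _ _ gpi])
    show "negligible {0::real}" by simp
    fix s :: real assume "s \<in> {0..} - {0}"
    hence s: "s > 0" by auto
    show "h s = gp s" unfolding h_def gp_def ff_def cpt_pos[OF s] fac_pos[OF s] by (simp add: mult.assoc)
  qed
  define m where "m = (\<lambda>s::real. exp (c * cmod p) * 120 * (c+s) powr (-4/3))"
  have mi: "m integrable_on {0..}"
    unfolding m_def using has_integral_mult_right[OF maj_int[OF assms(3)], of "exp (c * cmod p) * 120"]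
    by (auto simp: integrable_on_def)
  have Gle: "norm (G x) \<le> m x" if "x \<ge> 0" for x
    unfolding G_def m_def using ff_bound[OF assms(1,2) s2 assms(3) that assms(4) Rp2] dirv_norm[OF s2]
    by (simp add: norm_mult)
  have gc: "continuous_on {0..} G" unfolding G_def
    by (intro continuous_intros ray_cont[OF assms(1,2) s2 assms(3,4)])
  have Gi: "G integrable_on {0..b}" for b
    by (rule integrable_continuous_interval) (rule continuous_on_subset[OF gc], auto)
  have glim: "(\<lambda>n. integral {0..real n} G) \<longlonglongrightarrow> - Phi \<phi>' (-1) p t c"
  proof -
    have gmi: "(\<lambda>s. ff p t (complex_of_real c + complex_of_real s * dirv \<phi>' (-1)) * dirv \<phi>' (-1)) integrable_on {0..b}" for b
      using Gi[of b] unfolding G_def by (simp add: integrable_neg_iff)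
    have "integral {0..real n} G = - integral {0..real n} (\<lambda>s. ff p t (complex_of_real c + complex_of_real s * dirv \<phi>' (-1)) * dirv \<phi>' (-1))" for n
      unfolding G_def by (rule integral_neg)
    thus ?thesis using tendsto_minus[OF PM(3)] by simp
  qed
  have low0: "((\<lambda>s. G (-s)) has_integral - Phi \<phi>' (-1) p t c) {..0}"
    by (rule reflect_half[OF mi Gle Gi glim])
  have low: "(h has_integral - Phi \<phi>' (-1) p t c) {..0}"
  proof (rule has_integral_spike[OF _ _ low0])
    show "negligible {0::real}" by simp
    fix s :: real assume "s \<in> {..0} - {0}"
    hence s: "s < 0" by auto
    show "h s = G (-s)" unfolding h_def G_def ff_def cpt_neg[OF s] fac_neg[OF s] by (simp add: mult.assoc)
  qed
  have "(h has_integral (Phi \<phi>' 1 p t c + - Phi \<phi>' (-1) p t c)) ({0..} \<union> {..0})"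
  proof (rule has_integral_Un[OF up low])
    have "{0..} \<inter> {..0::real} = {0}" by auto
    thus "negligible ({0..} \<inter> {..0::real})" by simp
  qed
  moreover have "{0..} \<union> {..0::real} = UNIV" by auto
  ultimately have "integral UNIV h = Phi \<phi>' 1 p t c - Phi \<phi>' (-1) p t c" by (simp add: integral_unique)
  thus ?thesis unfolding invLaplace_def h_def[symmetric] by simp
qed

lemma R_bound: assumes ph: "0 < \<phi>" "\<phi> < \<phi>'" "\<phi>' < pi/6" and c: "c > 0" and t: "t \<ge> 0"
    and p: "p \<in> closure (sector \<phi>)"
  shows "cmod (invLaplace c \<phi>' r_fun p t) \<le> 720 * exp 1 * cmod p powr (1/3)"
proof -
  have s1: "(1::real) = 1 \<or> (1::real) = -1" and s2: "(-1::real) = 1 \<or> (-1::real) = -1" by auto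
  have ph': "0 < \<phi>'" using ph by auto
  have Rp1: "Re (p * dirv \<phi>' 1) \<le> 0" by (rule sector_Re[OF ph s1 p])
  have Rp2: "Re (p * dirv \<phi>' (-1)) \<le> 0" by (rule sector_Re[OF ph s2 p])
  define Psi where "Psi = (\<lambda>c'. Phi \<phi>' 1 p t c' - Phi \<phi>' (-1) p t c')"
  have le_eq: "Psi c1 = Psi c2" if "0 < c1" "c1 \<le> c2" for c1 c2
  proof -
    have "Phi \<phi>' 1 p t c1 - Phi \<phi>' 1 p t c2 = integral {c1..c2} (\<lambda>x. ff p t (complex_of_real x))"
      by (rule Phi_cauchy[OF ph' ph(3) s1 that t Rp1])
    moreover have "Phi \<phi>' (-1) p t c1 - Phi \<phi>' (-1) p t c2 = integral {c1..c2} (\<lambda>x. ff p t (complex_of_real x))"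
      by (rule Phi_cauchy[OF ph' ph(3) s2 that t Rp2])
    ultimately show ?thesis unfolding Psi_def by (simp add: algebra_simps)
  qed
  have const: "Psi c' = Psi c" if "c' > 0" for c'
  proof (cases "c' \<le> c")
    case True thus ?thesis using le_eq that by auto
  next
    case False thus ?thesis using le_eq[of c c'] c by auto
  qed
  have bnd: "cmod (Psi c') \<le> 720 * exp (c' * cmod p) * c' powr (-1/3)" if "c' > 0" for c'
  proof -
    have "cmod (Psi c') \<le> cmod (Phi \<phi>' 1 p t c') + cmod (Phi \<phi>' (-1) p t c')"
      unfolding Psi_def by (rule norm_triangle_ineq4)
    also have "\<dots> \<le> 3 * (exp (c' * cmod p) * 120) * c' powr (-1/3) + 3 * (exp (c' * cmod p) * 120) * c' powr (-1/3)"
      by (intro add_mono Phi_props(2)[OF ph' ph(3) s1 that t Rp1] Phi_props(2)[OF ph' ph(3) s2 that t Rp2])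
    finally show ?thesis by simp
  qed
  have inv: "cmod (invLaplace c \<phi>' r_fun p t) \<le> cmod (Psi c)"
  proof -
    have "cmod (invLaplace c \<phi>' r_fun p t) = cmod (Psi c) / (2 * pi)"
      unfolding invL_eq[OF ph' ph(3) c t Rp1 Rp2] Psi_def[symmetric]
      by (simp add: norm_mult norm_divide Psi_def)
    also have "\<dots> \<le> cmod (Psi c)"
    proof -
      have "cmod (Psi c) * 1 \<le> cmod (Psi c) * (2 * pi)" using pi_gt3 by (intro mult_left_mono) auto
      thus ?thesis using pi_gt3 by (simp add: divide_le_eq)
    qed
    finally show ?thesis .
  qed
  show ?thesis
  proof (cases "p = 0")
    case False
    hence np: "cmod p > 0" by simp
    have "cmod (Psi c) = cmod (Psi (1 / cmod p))" using const[of "1 / cmod p"] np by simp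
    also have "\<dots> \<le> 720 * exp (1 / cmod p * cmod p) * (1 / cmod p) powr (-1/3)"
      by (rule bnd) (use np in simp)
    also have "(1 / cmod p) powr (-1/3) = cmod p powr (1/3)"
      using np by (simp add: powr_divide powr_minus_divide)
    finally show ?thesis using inv np by simp
  next
    case True
    have "(\<lambda>n::nat. 720 * real n powr (-1/3)) \<longlonglongrightarrow> 0" by real_asymp
    moreover have "\<exists>N. \<forall>n\<ge>N. cmod (Psi c) \<le> 720 * real n powr (-1/3)"
    proof (intro exI allI impI)
      fix n :: nat assume n: "n \<ge> 1"
      hence "real n > 0" by simp
      hence "cmod (Psi (real n)) \<le> 720 * exp (real n * cmod p) * real n powr (-1/3)" by (rule bnd)
      thus "cmod (Psi c) \<le> 720 * real n powr (-1/3)" using const[OF \<open>real n > 0\<close>] True by simp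
    qed
    ultimately have "cmod (Psi c) \<le> 0" by (rule LIMSEQ_le_const)
    thus ?thesis using inv True by simp
  qed
qed

lemma weight: fixes \<rho> \<nu> :: real assumes r: "\<rho> \<ge> 0" and n: "\<nu> > 1"
  shows "(1 + \<rho>^2) * exp (- \<nu> * \<rho>) * \<rho> powr (1/3) \<le> 34 * \<nu> powr (-1/3)"
proof -
  define u where "u = \<nu> * \<rho>"
  have u0: "u \<ge> 0" unfolding u_def using r n by simp
  have a1: "u powr (1/3) \<le> 1 + u"
  proof (cases "u \<le> 1")
    case True
    have "u powr (1/3) \<le> 1 powr (1/3)" by (rule powr_mono2) (use True u0 in auto)
    thus ?thesis using u0 by simp
  next
    case False
    have "u powr (1/3) \<le> u powr 1" by (rule powr_mono) (use False in auto)
    thus ?thesis using False by simp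
  qed
  have a2: "1 + u \<le> 2 * exp (u/2)" using exp_ge_add_one_self[of "u/2"] u0 by linarith
  have a3: "1 + \<rho>^2 \<le> 17 * exp (\<rho>/2)"
  proof -
    have e4: "1 + \<rho>/4 \<le> exp (\<rho>/4)" using exp_ge_add_one_self[of "\<rho>/4"] by linarith
    have "(1 + \<rho>/4)^2 \<le> (exp (\<rho>/4))^2" by (rule power_mono[OF e4]) (use r in simp)
    also have "(exp (\<rho>/4))^2 = exp (\<rho>/2)" by (simp add: power2_eq_square exp_add[symmetric])
    finally have "(1 + \<rho>/4)^2 \<le> exp (\<rho>/2)" .
    moreover have "(1 + \<rho>/4)^2 = 1 + \<rho>/2 + \<rho>^2/16" by (simp add: power2_eq_square algebra_simps)
    ultimately have "1 + \<rho>^2/16 \<le> exp (\<rho>/2)" using r by linarith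
    thus ?thesis using zero_le_power2[of \<rho>] by linarith
  qed
  have a4: "exp (\<rho>/2) \<le> exp (u/2)"
  proof -
    have "1 * \<rho> \<le> \<nu> * \<rho>" using r n by (intro mult_right_mono) auto
    thus ?thesis unfolding u_def by simp
  qed
  have nn: "\<nu> powr (1/3) > 0" using n by simp
  have pm: "\<rho> powr (1/3) * \<nu> powr (1/3) = u powr (1/3)" unfolding u_def using r n
    by (simp add: powr_mult mult.commute)
  have "(1 + \<rho>^2) * exp (- \<nu> * \<rho>) * \<rho> powr (1/3) * \<nu> powr (1/3)
        = (1 + \<rho>^2) * exp (- u) * (\<rho> powr (1/3) * \<nu> powr (1/3))" by (simp add: u_def mult.assoc)
  also have "\<dots> = (1 + \<rho>^2) * exp (- u) * u powr (1/3)" unfolding pm ..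
  also have "\<dots> \<le> (17 * exp (u/2)) * exp (- u) * (2 * exp (u/2))"
  proof -
    have a34: "1 + \<rho>^2 \<le> 17 * exp (u/2)" using a3 a4 by linarith
    have a12: "u powr (1/3) \<le> 2 * exp (u/2)" using a1 a2 by linarith
    have m1: "(1 + \<rho>^2) * exp (- u) \<le> (17 * exp (u/2)) * exp (- u)"
      by (rule mult_right_mono[OF a34]) simp
    show ?thesis by (rule mult_mono[OF m1 a12]) simp_all
  qed
  also have "\<dots> = 34 * (exp (u/2) * exp (u/2) * exp (-u))" by simp
  also have "exp (u/2) * exp (u/2) * exp (-u) = 1" by (simp add: exp_add[symmetric])
  finally have "(1 + \<rho>^2) * exp (- \<nu> * \<rho>) * \<rho> powr (1/3) * \<nu> powr (1/3) \<le> 34" by simp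
  hence "(1 + \<rho>^2) * exp (- \<nu> * \<rho>) * \<rho> powr (1/3) \<le> 34 / \<nu> powr (1/3)"
    using nn by (simp add: le_divide_eq)
  also have "34 / \<nu> powr (1/3) = 34 * \<nu> powr (-1/3)" by (simp add: powr_minus_divide)
  finally show ?thesis .
qed

theorem corollary24:
  fixes \<phi> \<phi>' c :: real
  assumes "0 < \<phi>" and "\<phi> < \<phi>'" and "\<phi>' < pi / 6" and "0 < c"
  shows "\<exists>C::real. \<forall>T>0. \<forall>\<nu>>1.
           nu_norm \<phi> T \<nu> (invLaplace c \<phi>' r_fun) < ereal (C * \<nu> powr (- 1 / 3))"
proof (intro exI allI impI)
  define K1 where "K1 = 720 * exp (1::real)"
  have K1: "K1 > 0" unfolding K1_def by simp
  fix T \<nu> :: real assume T: "T > 0" and n: "\<nu> > 1"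
  define b where "b = K1 * 34 * \<nu> powr (-1/3)"
  have b0: "b > 0" unfolding b_def using K1 n by simp
  define A where "A = closure (sector \<phi>) \<times> {0..T}"
  define trm where "trm = (\<lambda>(p, t). ereal ((1 + (cmod p)\<^sup>2) * exp (- \<nu> * cmod p) * cmod (invLaplace c \<phi>' r_fun p t)))"
  have tb: "(1 + (cmod p)\<^sup>2) * exp (- \<nu> * cmod p) * cmod (invLaplace c \<phi>' r_fun p t) \<le> b"
    if "(p, t) \<in> A" for p t
  proof -
    have p: "p \<in> closure (sector \<phi>)" and t: "t \<ge> 0" using that unfolding A_def by auto
    have "(1 + (cmod p)\<^sup>2) * exp (- \<nu> * cmod p) * cmod (invLaplace c \<phi>' r_fun p t)
        \<le> (1 + (cmod p)\<^sup>2) * exp (- \<nu> * cmod p) * (K1 * cmod p powr (1/3))"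
      unfolding K1_def by (intro mult_left_mono R_bound[OF assms(1-3) assms(4) t p]) auto
    also have "\<dots> = K1 * ((1 + (cmod p)\<^sup>2) * exp (- \<nu> * cmod p) * cmod p powr (1/3))" by simp
    also have "\<dots> \<le> K1 * (34 * \<nu> powr (-1/3))"
      by (intro mult_left_mono weight n) (use K1 in auto)
    finally show ?thesis unfolding b_def by simp
  qed
  have X: "(SUP (p, t) \<in> A. ereal ((1 + (cmod p)\<^sup>2) * exp (- \<nu> * cmod p) * cmod (invLaplace c \<phi>' r_fun p t))) \<le> ereal b"
    by (rule SUP_least) (use tb in auto)
  have one: "(1, 0) \<in> A"
  proof -
    have "(1::complex) \<in> sector \<phi>" unfolding sector_def using assms(1) by simp
    thus ?thesis unfolding A_def using closure_subset T by auto
  qed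
  have X0: "ereal 0 \<le> (SUP (p, t) \<in> A. ereal ((1 + (cmod p)\<^sup>2) * exp (- \<nu> * cmod p) * cmod (invLaplace c \<phi>' r_fun p t)))"
  proof -
    have "ereal 0 \<le> ereal ((1 + (cmod (1::complex))\<^sup>2) * exp (- \<nu> * cmod (1::complex)) * cmod (invLaplace c \<phi>' r_fun 1 0))"
      by simp
    also have "\<dots> \<le> (SUP (p, t) \<in> A. ereal ((1 + (cmod p)\<^sup>2) * exp (- \<nu> * cmod p) * cmod (invLaplace c \<phi>' r_fun p t)))"
      using SUP_upper[OF one, of "\<lambda>(p, t). ereal ((1 + (cmod p)\<^sup>2) * exp (- \<nu> * cmod p) * cmod (invLaplace c \<phi>' r_fun p t))"]
      by simp
    finally show ?thesis .
  qed
  obtain x where x: "(SUP (p, t) \<in> A. ereal ((1 + (cmod p)\<^sup>2) * exp (- \<nu> * cmod p) * cmod (invLaplace c \<phi>' r_fun p t))) = ereal x"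
    using X X0 by (cases "(SUP (p, t) \<in> A. ereal ((1 + (cmod p)\<^sup>2) * exp (- \<nu> * cmod p) * cmod (invLaplace c \<phi>' r_fun p t)))") auto
  have x0: "0 \<le> x" and xb: "x \<le> b" using X X0 unfolding x by auto
  have "M0 * x \<le> \<bar>M0\<bar> * x" using x0 by (intro mult_right_mono) auto
  also have "\<dots> \<le> \<bar>M0\<bar> * b" using xb by (intro mult_left_mono) auto
  also have "\<dots> < (\<bar>M0\<bar> + 1) * b" using b0 by (simp add: distrib_right)
  finally have lt: "M0 * x < ((\<bar>M0\<bar> + 1) * K1 * 34) * \<nu> powr (-1/3)" unfolding b_def by (simp add: algebra_simps)
  have "nu_norm \<phi> T \<nu> (invLaplace c \<phi>' r_fun) = ereal (M0 * x)"
    unfolding nu_norm_def A_def[symmetric] x by simp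
  also have "\<dots> < ereal (((\<bar>M0\<bar> + 1) * K1 * 34) * \<nu> powr (- 1 / 3))" using lt by simp
  finally show "nu_norm \<phi> T \<nu> (invLaplace c \<phi>' r_fun) < ereal (((\<bar>M0\<bar> + 1) * K1 * 34) * \<nu> powr (- 1 / 3))" .
qed

end
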